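(* Let $X$ be a smooth Minkowski plane and $A\subset X$ finite. If $A$ is neither a double cluster nor a pseudo double cluster, then $\mathrm{FT}(A)\subseteq A\cup\operatorname{int}\operatorname{conv}A$.
   Context: A Minkowski plane is a two-dimensional real normed space $(X,\|\cdot\|)$ with unit ball $B$; it is smooth if every boundary point of $B$ has a unique supporting line. A proper exposed face of $B$ is the intersection of $B$ with a supporting line. For finite $A$, $\mathrm{FT}(A)$ is the set of minimizers of $\mathbf{x}\mapsto\sum_{\mathbf{a}\in A}\|\mathbf{x}-\mathbf{a}\|$ (Fermat-Torricelli points). A set $C=\{\mathbf{x}_1,\dots,\mathbf{x}_m,\mathbf{y}_1,\dots,\mathbf{y}_m\}$ is a double cluster with pairs $\mathbf{x}_i,\mathbf{y}_i$ if all $\frac{\mathbf{x}_i-\mathbf{y}_i}{\|\mathbf{x}_i-\mathbf{y}_i\|}$ lie in the same proper exposed face of $B$. A pseudo double cluster is the union of a double cluster $C$, a Fermat-Torricelli point of $C$ (its centre), and one further arbitrary point. $\operatorname{int}$ denotes interior. *)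

theory Defs
  imports "HOL-Analysis.Analysis"
begin

definition is_norm :: "(real^2 \<Rightarrow> real) \<Rightarrow> bool" where
  "is_norm N \<longleftrightarrow> (\<forall>x. N x = 0 \<longleftrightarrow> x = 0) \<and>
     (\<forall>c x. N (c *\<^sub>R x) = \<bar>c\<bar> * N x) \<and>
     (\<forall>x y. N (x + y) \<le> N x + N y)"

definition unit_ball :: "(real^2 \<Rightarrow> real) \<Rightarrow> (real^2) set" where
  "unit_ball N = {x. N x \<le> 1}"

definition supporting_line :: "(real^2 \<Rightarrow> real) \<Rightarrow> (real^2) set \<Rightarrow> bool" where
  "supporting_line N L \<longleftrightarrow> (\<exists>u c. u \<noteq> 0 \<and> L = {x. u \<bullet> x = c} \<and>
      (\<forall>x\<in>unit_ball N. u \<bullet> x \<le> c) \<and> (\<exists>x\<in>unit_ball N. u \<bullet> x = c))"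

definition smooth_plane :: "(real^2 \<Rightarrow> real) \<Rightarrow> bool" where
  "smooth_plane N \<longleftrightarrow> (\<forall>p\<in>frontier (unit_ball N). \<exists>!L. supporting_line N L \<and> p \<in> L)"

definition proper_exposed_face :: "(real^2 \<Rightarrow> real) \<Rightarrow> (real^2) set \<Rightarrow> bool" where
  "proper_exposed_face N F \<longleftrightarrow> (\<exists>L. supporting_line N L \<and> F = unit_ball N \<inter> L)"

definition FT :: "(real^2 \<Rightarrow> real) \<Rightarrow> (real^2) set \<Rightarrow> (real^2) set" where
  "FT N A = {x. \<forall>y. (\<Sum>a\<in>A. N (x - a)) \<le> (\<Sum>a\<in>A. N (y - a))}"

text \<open>Double cluster with pairs x i, y i (i < m): the 2m points are pairwise distinct.\<close>
definition double_cluster :: "(real^2 \<Rightarrow> real) \<Rightarrow> (real^2) set \<Rightarrow> bool" where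
  "double_cluster N C \<longleftrightarrow> (\<exists>m (x::nat \<Rightarrow> real^2) y F.
      C = x ` {..<m} \<union> y ` {..<m} \<and> card C = 2 * m \<and>
      proper_exposed_face N F \<and>
      (\<forall>i<m. (1 / N (x i - y i)) *\<^sub>R (x i - y i) \<in> F))"

definition pseudo_double_cluster :: "(real^2 \<Rightarrow> real) \<Rightarrow> (real^2) set \<Rightarrow> bool" where
  "pseudo_double_cluster N A \<longleftrightarrow> (\<exists>C c p. double_cluster N C \<and> c \<in> FT N C \<and>
      A = C \<union> {c, p})"

end

theory Submission
  imports Defs
begin

lemma inner2: "(u::real^2) \<bullet> x = u$1 * x$1 + u$2 * x$2"
  by (simp add: inner_vec_def sum_2)

lemma vec2_eq: "(x::real^2) = y \<longleftrightarrow> x$1 = y$1 \<and> x$2 = y$2"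
  by (simp add: vec_eq_iff forall_2)

definition norming :: "(real^2 \<Rightarrow> real) \<Rightarrow> real^2 \<Rightarrow> real^2 \<Rightarrow> bool" where
  "norming N u p \<longleftrightarrow> (\<forall>x. u \<bullet> x \<le> N x) \<and> u \<bullet> p = N p"

context
  fixes N :: "real^2 \<Rightarrow> real"
  assumes nN: "is_norm N"
begin

lemma N0: "N 0 = 0" using nN by (simp add: is_norm_def)
lemma N_eq0: "N x = 0 \<longleftrightarrow> x = 0" using nN by (simp add: is_norm_def)
lemma N_scale: "N (c *\<^sub>R x) = \<bar>c\<bar> * N x" using nN by (simp add: is_norm_def)
lemma N_tri: "N (x + y) \<le> N x + N y" using nN by (simp add: is_norm_def)
lemma N_minus: "N (- x) = N x" using N_scale[of "-1" x] by simp
lemma N_nonneg: "N x \<ge> 0"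
proof -
  have "N (x + (-x)) \<le> N x + N (-x)" by (rule N_tri)
  then show ?thesis by (simp add: N0 N_minus)
qed
lemma N_pos: "x \<noteq> 0 \<Longrightarrow> N x > 0"
  using N_nonneg[of x] N_eq0[of x] by linarith
lemma N_commute: "N (x - y) = N (y - x)"
  using N_minus[of "x - y"] by simp
lemma N_tri_diff: "N x \<le> N (x - y) + N y"
  using N_tri[of "x - y" y] by simp


lemma frontier_pt:
  assumes "N q = 1" shows "q \<in> frontier (unit_ball N)"
proof -
  have q0: "q \<noteq> 0" using assms N0 by auto
  have "q \<in> closure (unit_ball N)" using assms
    by (intro closure_subset[THEN subsetD]) (simp add: unit_ball_def)
  moreover have "q \<notin> interior (unit_ball N)"
  proof
    assume "q \<in> interior (unit_ball N)"
    then obtain e where e: "e > 0" "ball q e \<subseteq> unit_ball N"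
      using mem_interior by blast
    define y where "y = (1 + e / (2 * norm q)) *\<^sub>R q"
    have nq: "norm q > 0" using q0 by simp
    have "dist q y = e/2" unfolding y_def dist_norm
    proof -
      have "q - (1 + e / (2 * norm q)) *\<^sub>R q = (- (e / (2 * norm q))) *\<^sub>R q"
        by (simp add: algebra_simps)
      moreover have "norm ((- (e / (2 * norm q))) *\<^sub>R q) = (e / (2 * norm q)) * norm q"
        unfolding norm_scaleR abs_minus_cancel using e(1) nq by simp
      moreover have "(e / (2 * norm q)) * norm q = e / 2" using nq by (simp add: field_simps)
      ultimately show "norm (q - (1 + e / (2 * norm q)) *\<^sub>R q) = e / 2"
        by simp
    qed
    then have "y \<in> unit_ball N" using e by auto
    moreover have "N y = 1 + e / (2 * norm q)"
      unfolding y_def N_scale using assms nq e(1) by simp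
    ultimately show False using nq e(1) unfolding unit_ball_def
      by (smt (verit) divide_pos_pos mem_Collect_eq)
  qed
  ultimately show ?thesis by (simp add: frontier_def)
qed


lemma norming_ext:
  assumes p0: "p \<noteq> 0" and u: "norming N u p"
  shows "supporting_line N {x. u \<bullet> x = 1} \<and> (1 / N p) *\<^sub>R p \<in> {x. u \<bullet> x = 1}"
proof -
  have np: "N p > 0" using N_pos p0 by auto
  have up: "u \<bullet> ((1 / N p) *\<^sub>R p) = 1" using u np by (simp add: norming_def)
  have N1: "N ((1 / N p) *\<^sub>R p) = 1" using np by (simp add: N_scale)
  have "u \<noteq> 0" using up by auto
  moreover have "\<forall>x\<in>unit_ball N. u \<bullet> x \<le> 1"
    using u unfolding norming_def unit_ball_def by (auto intro: order_trans)
  moreover have "(1 / N p) *\<^sub>R p \<in> unit_ball N" using N1 by (simp add: unit_ball_def)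
  ultimately show ?thesis using up unfolding supporting_line_def by blast
qed

lemma line_eq_imp:
  assumes "{x. (u::real^2) \<bullet> x = 1} = {x. v \<bullet> x = 1}" and "u \<bullet> q = 1"
  shows "u = v"
proof -
  have q: "v \<bullet> q = 1" using assms by blast
  have "u \<bullet> y = v \<bullet> y" for y
  proof (cases "u \<bullet> y = 0")
    case True
    then have "u \<bullet> (q + y) = 1" using assms(2) by (simp add: inner_add_right)
    then have "v \<bullet> (q + y) = 1" using assms(1) by blast
    then show ?thesis using q True by (simp add: inner_add_right)
  next
    case False
    then have "u \<bullet> ((1 / (u \<bullet> y)) *\<^sub>R y) = 1" by simp
    then have "v \<bullet> ((1 / (u \<bullet> y)) *\<^sub>R y) = 1" using assms(1) by blast
    then show ?thesis using False by (simp add: field_simps)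
  qed
  then have "(u - v) \<bullet> y = 0" for y by (simp add: inner_diff_left)
  from this[of "u - v"] show ?thesis by simp
qed

lemma norming_unique:
  assumes sm: "smooth_plane N" and p0: "p \<noteq> 0" and u: "norming N u p" and v: "norming N v p"
  shows "u = v"
proof -
  have np: "N p > 0" using N_pos p0 by auto
  let ?q = "(1 / N p) *\<^sub>R p"
  have "?q \<in> frontier (unit_ball N)" using np by (intro frontier_pt) (simp add: N_scale)
  then have ex1: "\<exists>!L. supporting_line N L \<and> ?q \<in> L" using sm by (simp add: smooth_plane_def)
  have "{x. u \<bullet> x = 1} = {x. v \<bullet> x = 1}"
    using ex1 norming_ext[OF p0 u] norming_ext[OF p0 v] by blast
  moreover have "u \<bullet> ?q = 1" using norming_ext[OF p0 u] by simp
  ultimately show ?thesis by (rule line_eq_imp)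
qed

lemma norming_exists:
  assumes sm: "smooth_plane N" and p0: "p \<noteq> 0"
  shows "\<exists>u. norming N u p"
proof -
  have np: "N p > 0" using N_pos p0 by auto
  let ?q = "(1 / N p) *\<^sub>R p"
  have "?q \<in> frontier (unit_ball N)" using np by (intro frontier_pt) (simp add: N_scale)
  then obtain L where "supporting_line N L" "?q \<in> L" using sm by (auto simp: smooth_plane_def)
  then obtain u c where uc: "u \<noteq> 0" "L = {x. u \<bullet> x = c}" "\<forall>x\<in>unit_ball N. u \<bullet> x \<le> c"
    and qL: "u \<bullet> ?q = c" unfolding supporting_line_def by auto
  have nu: "N u > 0" using N_pos uc(1) by auto
  have "(1 / N u) *\<^sub>R u \<in> unit_ball N" using nu by (simp add: unit_ball_def N_scale)
  then have "u \<bullet> ((1 / N u) *\<^sub>R u) \<le> c" using uc(3) by blast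
  moreover have "u \<bullet> u > 0" using uc(1) by simp
  moreover have "u \<bullet> ((1 / N u) *\<^sub>R u) = (u \<bullet> u) / N u" by simp
  ultimately have c0: "c > 0" using nu
    by (smt (verit, best) divide_pos_pos)
  have bound: "u \<bullet> x \<le> c * N x" for x
  proof (cases "x = 0")
    case True then show ?thesis by (simp add: N0)
  next
    case False
    then have nx: "N x > 0" using N_pos by auto
    have "(1 / N x) *\<^sub>R x \<in> unit_ball N" using nx by (simp add: unit_ball_def N_scale)
    then have "u \<bullet> ((1 / N x) *\<^sub>R x) \<le> c" using uc(3) by blast
    then show ?thesis using nx by (simp add: field_simps)
  qed
  have "norming N ((1/c) *\<^sub>R u) p"
    unfolding norming_def
  proof
    show "\<forall>x. (1 / c) *\<^sub>R u \<bullet> x \<le> N x" using bound c0 by (simp add: field_simps)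
    show "(1 / c) *\<^sub>R u \<bullet> p = N p" using qL c0 np by (simp add: field_simps)
  qed
  then show ?thesis by blast
qed

lemma N_conv: "0 \<le> t \<Longrightarrow> t \<le> 1 \<Longrightarrow> N ((1 - t) *\<^sub>R p + t *\<^sub>R q) \<le> (1 - t) * N p + t * N q"
  using N_tri[of "(1 - t) *\<^sub>R p" "t *\<^sub>R q"] by (simp add: N_scale)

lemma decomp2:
  fixes p d x :: "real^2"
  assumes "p$1*d$2 - p$2*d$1 \<noteq> 0"
  shows "\<exists>a b. x = a *\<^sub>R p + b *\<^sub>R d"
proof -
  let ?D = "p$1*d$2 - p$2*d$1"
  let ?A = "x$1*d$2 - x$2*d$1" and ?B = "p$1*x$2 - p$2*x$1"
  have e1: "?A * p$1 + ?B * d$1 = x$1 * ?D" by (simp add: algebra_simps)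
  have e2: "?A * p$2 + ?B * d$2 = x$2 * ?D" by (simp add: algebra_simps)
  have f1: "(?A/?D) * p$1 + (?B/?D) * d$1 = (?A * p$1 + ?B * d$1)/?D"
    by (simp add: add_divide_distrib)
  have f2: "(?A/?D) * p$2 + (?B/?D) * d$2 = (?A * p$2 + ?B * d$2)/?D"
    by (simp add: add_divide_distrib)
  have "x = (?A/?D) *\<^sub>R p + (?B/?D) *\<^sub>R d"
    unfolding vec2_eq using f1 f2 e1 e2 assms by simp
  then show ?thesis by blast
qed

lemma dir_bound:
  assumes sm: "smooth_plane N" and p0: "p \<noteq> 0" and u: "norming N u p" and e: "\<epsilon> > 0"
  shows "eventually (\<lambda>s. N (p + s *\<^sub>R d) \<le> N p + s * (u \<bullet> d + \<epsilon>)) (at_right 0)"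
proof (cases "p$1*d$2 - p$2*d$1 = 0")
  case True
  obtain l where dl: "d = l *\<^sub>R p"
  proof (cases "p$1 = 0")
    case False
    have "d = (d$1/p$1) *\<^sub>R p" using False True unfolding vec2_eq
      by (simp add: field_simps)
    then show ?thesis using that by blast
  next
    case z: True
    then have "p$2 \<noteq> 0" using p0 unfolding vec2_eq by auto
    then have "d = (d$2/p$2) *\<^sub>R p" using z True unfolding vec2_eq by (simp add: field_simps)
    then show ?thesis using that by blast
  qed
  have ud: "u \<bullet> d = l * N p" using u dl by (simp add: norming_def)
  have "eventually (\<lambda>s. s \<in> {0<..<1/(\<bar>l\<bar>+1)}) (at_right (0::real))"
    by (rule eventually_at_right_real) simp
  then show ?thesis
  proof (rule eventually_mono)
    fix s assume s: "s \<in> {0<..<1/(\<bar>l\<bar>+1)}"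
    then have "s * \<bar>l\<bar> < 1"
      by (simp add: field_simps)
    then have pos: "1 + s * l > 0" using s by (smt (verit) abs_ge_self abs_minus_cancel minus_mult_right mult_minus_right abs_mult_pos abs_le_iff greaterThanLessThan_iff mult_left_mono)
    have "p + s *\<^sub>R d = (1 + s * l) *\<^sub>R p" using dl by (simp add: algebra_simps)
    then have "N (p + s *\<^sub>R d) = (1 + s * l) * N p" using pos by (simp add: N_scale)
    also have "\<dots> \<le> N p + s * (u \<bullet> d + \<epsilon>)" using ud s e by (simp add: algebra_simps)
    finally show "N (p + s *\<^sub>R d) \<le> N p + s * (u \<bullet> d + \<epsilon>)" .
  qed
next
  case False
  define det where "det = p$1*d$2 - p$2*d$1"
  have det0: "det \<noteq> 0" using False det_def by simp
  define D where "D = u \<bullet> d + \<epsilon>"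
  have np: "N p > 0" using N_pos p0 by auto
  have up: "u \<bullet> p = N p" using u by (simp add: norming_def)
  have ex: "\<exists>s0>0. N (p + s0 *\<^sub>R d) < N p + s0 * D"
  proof (rule ccontr)
    assume "\<not> ?thesis"
    then have H: "\<And>s. s > 0 \<Longrightarrow> N p + s * D \<le> N (p + s *\<^sub>R d)" by (meson not_less)
    define w :: "real^2" where "w = vector [-(p$2), p$1]"
    define u' where "u' = u + (\<epsilon>/det) *\<^sub>R w"
    have wp: "w \<bullet> p = 0" unfolding w_def inner2 by simp
    have wd: "w \<bullet> d = det" unfolding w_def inner2 det_def by (simp add: algebra_simps)
    have u'p: "u' \<bullet> p = N p" unfolding u'_def using wp up by (simp add: inner_add_left)
    have u'd: "u' \<bullet> d = D" unfolding u'_def D_def using wd det0 by (simp add: inner_add_left)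
    have "norming N u' p"
      unfolding norming_def
    proof (intro conjI allI u'p)
      fix x
      obtain a b where x: "x = a *\<^sub>R p + b *\<^sub>R d" using decomp2 False by blast
      have u'x: "u' \<bullet> x = a * N p + b * D" unfolding x using u'p u'd
        by (simp add: inner_add_right)
      consider "b = 0" | "b > 0" | "b < 0" by linarith
      then show "u' \<bullet> x \<le> N x"
      proof cases
        case 1
        then show ?thesis using u'x x np u'p by (simp add: N_scale mult_right_mono)
      next
        case 2
        define sg where "sg = \<bar>a\<bar> + 1"
        define a' where "a' = a + sg"
        have a'0: "a' > 0" unfolding a'_def sg_def by linarith
        have "N p + (b / a') * D \<le> N (p + (b / a') *\<^sub>R d)" by (rule H) (use 2 a'0 in simp)
        then have "a' * (N p + (b / a') * D) \<le> a' * N (p + (b / a') *\<^sub>R d)"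
          using a'0 by simp
        moreover have "a' * N (p + (b / a') *\<^sub>R d) = N (a' *\<^sub>R (p + (b / a') *\<^sub>R d))"
          using a'0 by (simp add: N_scale)
        moreover have "a' *\<^sub>R (p + (b / a') *\<^sub>R d) = x + sg *\<^sub>R p"
        proof -
          have k: "a' * (b / a') = b" using a'0 by simp
          have "a' *\<^sub>R (p + (b / a') *\<^sub>R d) = a' *\<^sub>R p + b *\<^sub>R d"
            using k by (simp add: scaleR_add_right)
          then show ?thesis unfolding x a'_def by (simp add: scaleR_add_left algebra_simps)
        qed
        moreover have "N (x + sg *\<^sub>R p) \<le> N x + sg * N p"
          using N_tri[of x "sg *\<^sub>R p"] sg_def by (simp add: N_scale)
        moreover have "a' * (N p + (b / a') * D) = a' * N p + b * D" using a'0
          by (simp add: field_simps)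
        moreover have "a' * N p = a * N p + sg * N p" by (simp add: a'_def algebra_simps)
        ultimately show ?thesis using u'x by (smt (verit))
      next
        case 3
        have "u \<bullet> x = a * N p + b * (u \<bullet> d)" unfolding x using up by (simp add: inner_add_right)
        moreover have "b * D \<le> b * (u \<bullet> d)" using 3 e mult_pos_neg[of \<epsilon> b] unfolding D_def by (simp add: algebra_simps)
        moreover have "u \<bullet> x \<le> N x" using u by (simp add: norming_def)
        ultimately show ?thesis using u'x by linarith
      qed
    qed
    then have "u' = u" using norming_unique[OF sm p0] u by blast
    then have "(\<epsilon>/det) *\<^sub>R w = 0" unfolding u'_def by simp
    then have "w = 0" using e det0 by simp
    then show False using p0 unfolding w_def vec2_eq by simp
  qed
  then obtain s0 where s0: "s0 > 0" "N (p + s0 *\<^sub>R d) < N p + s0 * D" by blast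
  have "eventually (\<lambda>s. s \<in> {0<..<s0}) (at_right (0::real))"
    by (rule eventually_at_right_real) (use s0 in simp)
  then show ?thesis
  proof (rule eventually_mono)
    fix s assume s: "s \<in> {0<..<s0}"
    define t where "t = s / s0"
    have t: "0 < t" "t < 1" using s s0 unfolding t_def by (auto simp: field_simps)
    have ts: "t * s0 = s" unfolding t_def using s0 by simp
    have "p + s *\<^sub>R d = (1 - t) *\<^sub>R p + t *\<^sub>R (p + s0 *\<^sub>R d)"
      using ts by (simp add: algebra_simps flip: ts)
    then have "N (p + s *\<^sub>R d) \<le> (1 - t) * N p + t * N (p + s0 *\<^sub>R d)"
      using N_conv[of t p "p + s0 *\<^sub>R d"] t by simp
    also have "\<dots> \<le> (1 - t) * N p + t * (N p + s0 * D)"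
      using s0 t by (simp add: mult_left_mono)
    also have "\<dots> = N p + s * D" using ts by (simp add: algebra_simps flip: ts)
    finally show "N (p + s *\<^sub>R d) \<le> N p + s * (u \<bullet> d + \<epsilon>)" unfolding D_def .
  qed
qed

lemma grad_zero:
  assumes sm: "smooth_plane N" and fin: "finite A" and zA: "z \<notin> A" and zFT: "z \<in> FT N A"
    and U: "\<And>a. a \<in> A \<Longrightarrow> norming N (U a) (z - a)"
  shows "(\<Sum>a\<in>A. U a) = 0"
proof (rule ccontr)
  define P where "P = (\<Sum>a\<in>A. U a)"
  assume "(\<Sum>a\<in>A. U a) \<noteq> 0"
  then have P0: "P \<bullet> P > 0" unfolding P_def by simp
  define e where "e = (P \<bullet> P) / (2 * (real (card A) + 1))"
  have e0: "e > 0" using P0 unfolding e_def by simp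
  define d where "d = - P"
  have "\<forall>a\<in>A. eventually (\<lambda>s. N ((z - a) + s *\<^sub>R d) \<le> N (z - a) + s * (U a \<bullet> d + e)) (at_right 0)"
  proof
    fix a assume a: "a \<in> A"
    then have "z - a \<noteq> 0" using zA by auto
    then show "eventually (\<lambda>s. N ((z - a) + s *\<^sub>R d) \<le> N (z - a) + s * (U a \<bullet> d + e)) (at_right 0)"
      by (rule dir_bound[OF sm _ U[OF a] e0])
  qed
  then have "eventually (\<lambda>s. \<forall>a\<in>A. N ((z - a) + s *\<^sub>R d) \<le> N (z - a) + s * (U a \<bullet> d + e)) (at_right 0)"
    by (rule eventually_ball_finite[OF fin])
  then obtain b where b: "b > 0" "\<And>s. s > 0 \<Longrightarrow> s < b \<Longrightarrow> \<forall>a\<in>A. N ((z - a) + s *\<^sub>R d) \<le> N (z - a) + s * (U a \<bullet> d + e)"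
    unfolding eventually_at_right_field by blast
  define s where "s = b / 2"
  have s: "s > 0" "s < b" using b unfolding s_def by auto
  have "(\<Sum>a\<in>A. N (z - a)) \<le> (\<Sum>a\<in>A. N ((z + s *\<^sub>R d) - a))"
    using zFT unfolding FT_def by blast
  also have "\<dots> \<le> (\<Sum>a\<in>A. N (z - a) + s * (U a \<bullet> d + e))"
  proof (rule sum_mono)
    fix a assume a: "a \<in> A"
    have eq: "(z + s *\<^sub>R d) - a = (z - a) + s *\<^sub>R d" by (simp add: algebra_simps)
    have "N ((z - a) + s *\<^sub>R d) \<le> N (z - a) + s * (U a \<bullet> d + e)"
      using b(2)[OF s] a by blast
    then show "N ((z + s *\<^sub>R d) - a) \<le> N (z - a) + s * (U a \<bullet> d + e)"
      by (simp only: eq)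
  qed
  also have "\<dots> = (\<Sum>a\<in>A. N (z - a)) + s * (P \<bullet> d) + s * (real (card A) * e)"
    unfolding P_def by (simp add: sum.distrib sum_distrib_left inner_sum_left algebra_simps)
  finally have "0 \<le> s * (P \<bullet> d + real (card A) * e)" by (simp add: algebra_simps)
  then have "0 \<le> P \<bullet> d + real (card A) * e" using s by (simp add: zero_le_mult_iff)
  moreover have "real (card A) * e < P \<bullet> P"
  proof -
    have "real (card A) * e = (P \<bullet> P) * (real (card A) / (2 * (real (card A) + 1)))"
      unfolding e_def by simp
    also have "\<dots> < (P \<bullet> P) * 1"
      using P0 by (intro mult_strict_left_mono) (auto simp: field_simps)
    finally show ?thesis by simp
  qed
  ultimately show False unfolding d_def by simp
qed

end

lemma sep_point:
  fixes A :: "(real^2) set"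
  assumes "z \<notin> interior (convex hull A)"
  shows "\<exists>\<psi>. \<psi> \<noteq> 0 \<and> (\<forall>a\<in>A. \<psi> \<bullet> a \<le> \<psi> \<bullet> z)"
proof (cases "interior (convex hull A) = {}")
  case True
  obtain a b where ab: "a \<noteq> 0" "convex hull A \<subseteq> {x. a \<bullet> x = b}"
    using empty_interior_subset_hyperplane[OF convex_convex_hull True] by blast
  have AS: "A \<subseteq> convex hull A" by (rule hull_subset)
  show ?thesis
  proof (cases "a \<bullet> z \<ge> b")
    case True
    then show ?thesis using ab AS by (intro exI[of _ a]) auto
  next
    case False
    then show ?thesis using ab AS by (intro exI[of _ "-a"]) auto
  qed
next
  case False
  obtain a b where ab: "a \<noteq> 0" "\<forall>x\<in>interior (convex hull A). a \<bullet> x \<le> b" "\<forall>x\<in>{z}. a \<bullet> x \<ge> b"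
  proof -
    have dj: "interior (convex hull A) \<inter> {z} = {}" using assms by blast
    show ?thesis
      using separating_hyperplane_sets[OF convex_interior[OF convex_convex_hull] convex_singleton False _ dj]
        that by blast
  qed
  have "closure (interior (convex hull A)) \<subseteq> {x. a \<bullet> x \<le> b}"
    using ab(2) by (intro closure_minimal) (auto simp: closed_halfspace_le)
  then have "convex hull A \<subseteq> {x. a \<bullet> x \<le> b}"
    using convex_closure_interior[OF convex_convex_hull False] closure_subset by blast
  then show ?thesis using ab hull_subset[of A convex] by (intro exI[of _ a]) auto
qed


theorem corollary4p9:
  fixes N :: "real^2 \<Rightarrow> real" and A :: "(real^2) set"
  assumes "is_norm N" and "smooth_plane N" and "finite A"
    and "\<not> double_cluster N A" and "\<not> pseudo_double_cluster N A"
  shows "FT N A \<subseteq> A \<union> interior (convex hull A)"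
proof
  note nN = assms(1) and sm = assms(2) and fin = assms(3)
  fix z assume zFT: "z \<in> FT N A"
  show "z \<in> A \<union> interior (convex hull A)"
  proof (rule ccontr)
    assume "\<not> ?thesis"
    then have zA: "z \<notin> A" and zI: "z \<notin> interior (convex hull A)" by auto
    obtain \<psi> where \<psi>: "\<psi> \<noteq> 0" "\<forall>a\<in>A. \<psi> \<bullet> a \<le> \<psi> \<bullet> z" using sep_point[OF zI] by blast
    define U where "U a = (SOME u. norming N u (z - a))" for a
    have U: "norming N (U a) (z - a)" if "a \<in> A" for a
    proof -
      have "z - a \<noteq> 0" using that zA by auto
      then have "\<exists>u. norming N u (z - a)" using norming_exists[OF nN sm] by blast
      then show ?thesis unfolding U_def by (rule someI_ex)
    qed
    have Phi: "(\<Sum>a\<in>A. U a) = 0" by (rule grad_zero[OF nN sm fin zA zFT U])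
    define v0 :: "real^2" where "v0 = vector [-(\<psi>$2), \<psi>$1]"
    have v0ne: "v0 \<noteq> 0" using \<psi>(1) unfolding v0_def vec2_eq by auto
    have psiv0: "\<psi> \<bullet> v0 = 0" unfolding v0_def inner2 by simp
    obtain \<phi> where phi: "norming N \<phi> v0" using norming_exists[OF nN sm v0ne] by blast
    define z0 :: "real^2" where "z0 = vector [\<phi>$2, -(\<phi>$1)]"
    have phiz0: "\<phi> \<bullet> z0 = 0" unfolding z0_def inner2 by simp
    have nv0: "N v0 > 0" using N_pos[OF nN v0ne] .
    have phiv0: "\<phi> \<bullet> v0 = N v0" using phi by (simp add: norming_def)
    have psiz0: "\<psi> \<bullet> z0 = N v0" using phiv0 unfolding z0_def v0_def inner2 by (simp add: algebra_simps)
    have nabs: "\<bar>u \<bullet> x\<bar> \<le> N x" if "norming N u p" for u p x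
    proof -
      have "u \<bullet> x \<le> N x" "u \<bullet> (-x) \<le> N (-x)" using that unfolding norming_def by blast+
      then show ?thesis using N_minus[OF nN, of x] by simp
    qed
    have det: "v0$1 * z0$2 - v0$2 * z0$1 \<noteq> 0"
    proof -
      have "v0$1 * z0$2 - v0$2 * z0$1 = - (\<psi> \<bullet> z0)" unfolding z0_def v0_def inner2
        by (simp add: algebra_simps)
      then show ?thesis using psiz0 nv0 by simp
    qed
    have dec: "\<exists>\<alpha> \<beta>. z - a = \<alpha> *\<^sub>R v0 + \<beta> *\<^sub>R z0 \<and> \<beta> \<ge> 0 \<and>
        N (z - a) = \<alpha> * (U a \<bullet> v0) + \<beta> * (U a \<bullet> z0) \<and> \<phi> \<bullet> (z - a) = \<alpha> * N v0 \<and>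
        \<alpha> * (U a \<bullet> v0) \<le> \<bar>\<alpha>\<bar> * N v0 \<and> \<bar>\<alpha>\<bar> * N v0 \<le> N (z - a)" if a: "a \<in> A" for a
    proof -
      obtain \<alpha> \<beta> where ab: "z - a = \<alpha> *\<^sub>R v0 + \<beta> *\<^sub>R z0" using decomp2[OF nN det] by blast
      have "\<psi> \<bullet> (z - a) \<ge> 0" using \<psi>(2) a by (simp add: inner_diff_right)
      moreover have "\<psi> \<bullet> (z - a) = \<beta> * N v0" unfolding ab using psiv0 psiz0
        by (simp add: inner_add_right)
      ultimately have b0: "\<beta> \<ge> 0" using nv0 by (simp add: zero_le_mult_iff)
      have "N (z - a) = U a \<bullet> (z - a)" using U[OF a] by (simp add: norming_def)
      also have "\<dots> = \<alpha> * (U a \<bullet> v0) + \<beta> * (U a \<bullet> z0)" unfolding ab by (simp add: inner_add_right)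
      finally have Nv: "N (z - a) = \<alpha> * (U a \<bullet> v0) + \<beta> * (U a \<bullet> z0)" .
      have pz: "\<phi> \<bullet> (z - a) = \<alpha> * N v0" unfolding ab using phiv0 phiz0 by (simp add: inner_add_right)
      have "\<alpha> * (U a \<bullet> v0) \<le> \<bar>\<alpha>\<bar> * \<bar>U a \<bullet> v0\<bar>" by (metis abs_ge_self abs_mult)
      also have "\<dots> \<le> \<bar>\<alpha>\<bar> * N v0" using nabs[OF U[OF a], of v0] by (simp add: mult_left_mono)
      finally have t1: "\<alpha> * (U a \<bullet> v0) \<le> \<bar>\<alpha>\<bar> * N v0" .
      have "\<bar>\<alpha>\<bar> * N v0 = \<bar>\<phi> \<bullet> (z - a)\<bar>" using pz nv0 by (simp add: abs_mult)
      also have "\<dots> \<le> N (z - a)" by (rule nabs[OF phi])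
      finally have t2: "\<bar>\<alpha>\<bar> * N v0 \<le> N (z - a)" .
      show ?thesis using ab b0 Nv pz t1 t2 by blast
    qed
    have key: "U a \<bullet> z0 \<ge> 0" if a: "a \<in> A" for a
    proof -
      obtain \<alpha> \<beta> where ab: "z - a = \<alpha> *\<^sub>R v0 + \<beta> *\<^sub>R z0" "\<beta> \<ge> 0"
        "N (z - a) = \<alpha> * (U a \<bullet> v0) + \<beta> * (U a \<bullet> z0)" "\<phi> \<bullet> (z - a) = \<alpha> * N v0"
        "\<alpha> * (U a \<bullet> v0) \<le> \<bar>\<alpha>\<bar> * N v0" "\<bar>\<alpha>\<bar> * N v0 \<le> N (z - a)"
        using dec[OF a] by blast
      have bz: "\<beta> * (U a \<bullet> z0) \<ge> 0" using ab(3,5,6) by linarith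
      show ?thesis
      proof (cases "\<beta> = 0")
        case False
        then have "\<beta> > 0" using ab(2) by simp
        then show ?thesis using bz by (simp add: zero_le_mult_iff)
      next
        case True
        then have za: "z - a = \<alpha> *\<^sub>R v0" using ab(1) by simp
        have "z - a \<noteq> 0" using a zA by auto
        then have a0: "\<alpha> \<noteq> 0" using za by auto
        have "norming N (sgn \<alpha> *\<^sub>R \<phi>) (z - a)"
          unfolding norming_def
        proof (intro conjI allI)
          fix x
          have "(sgn \<alpha> *\<^sub>R \<phi>) \<bullet> x = sgn \<alpha> * (\<phi> \<bullet> x)" by simp
          also have "\<dots> \<le> \<bar>\<phi> \<bullet> x\<bar>"
          proof (cases "\<alpha> > 0")
            case True then show ?thesis by simp
          next
            case False then have "\<alpha> < 0" using a0 by simp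
            then show ?thesis by simp
          qed
          also have "\<dots> \<le> N x" by (rule nabs[OF phi])
          finally show "(sgn \<alpha> *\<^sub>R \<phi>) \<bullet> x \<le> N x" .
        next
          have "(sgn \<alpha> *\<^sub>R \<phi>) \<bullet> (z - a) = sgn \<alpha> * \<alpha> * N v0" unfolding za using phiv0 by simp
          also have "\<dots> = \<bar>\<alpha>\<bar> * N v0"
          proof (cases "\<alpha> > 0")
            case True then show ?thesis by simp
          next
            case False then have "\<alpha> < 0" using a0 by simp
            then show ?thesis by simp
          qed
          also have "\<dots> = N (z - a)" unfolding za by (simp add: N_scale[OF nN])
          finally show "(sgn \<alpha> *\<^sub>R \<phi>) \<bullet> (z - a) = N (z - a)" .
        qed
        then have "U a = sgn \<alpha> *\<^sub>R \<phi>" using norming_unique[OF nN sm \<open>z - a \<noteq> 0\<close> U[OF a]] by blast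
        then show ?thesis using phiz0 by simp
      qed
    qed
    have "(\<Sum>a\<in>A. U a \<bullet> z0) = (\<Sum>a\<in>A. U a) \<bullet> z0" by (simp add: inner_sum_left)
    then have "(\<Sum>a\<in>A. U a \<bullet> z0) = 0" using Phi by simp
    moreover have "(\<Sum>a\<in>A. U a \<bullet> z0) = 0 \<longleftrightarrow> (\<forall>a\<in>A. U a \<bullet> z0 = 0)"
      by (rule sum_nonneg_eq_0_iff[OF fin, of "\<lambda>a. U a \<bullet> z0"]) (rule key)
    ultimately have all0: "\<forall>a\<in>A. U a \<bullet> z0 = 0" by simp
    have key2: "\<bar>\<phi> \<bullet> (z - a)\<bar> = N (z - a) \<and> U a \<bullet> v0 = sgn (\<phi> \<bullet> (z - a)) * N v0" if a: "a \<in> A" for a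
    proof -
      obtain \<alpha> \<beta> where ab: "z - a = \<alpha> *\<^sub>R v0 + \<beta> *\<^sub>R z0" "\<beta> \<ge> 0"
        "N (z - a) = \<alpha> * (U a \<bullet> v0) + \<beta> * (U a \<bullet> z0)" "\<phi> \<bullet> (z - a) = \<alpha> * N v0"
        "\<alpha> * (U a \<bullet> v0) \<le> \<bar>\<alpha>\<bar> * N v0" "\<bar>\<alpha>\<bar> * N v0 \<le> N (z - a)"
        using dec[OF a] by blast
      have e1: "N (z - a) = \<alpha> * (U a \<bullet> v0)" using ab(3) all0 a by simp
      have e2: "\<alpha> * (U a \<bullet> v0) = \<bar>\<alpha>\<bar> * N v0" using e1 ab(5,6) by linarith
      have e3: "\<bar>\<phi> \<bullet> (z - a)\<bar> = N (z - a)" using ab(4) e1 e2 nv0 by (simp add: abs_mult)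
      have "z - a \<noteq> 0" using a zA by auto
      then have "N (z - a) > 0" using N_pos[OF nN] by blast
      then have a0: "\<alpha> \<noteq> 0" using e1 by auto
      have "U a \<bullet> v0 = sgn (\<phi> \<bullet> (z - a)) * N v0"
      proof (cases "\<alpha> > 0")
        case True
        then have "U a \<bullet> v0 = N v0" using e2 by simp
        moreover have "\<phi> \<bullet> (z - a) > 0" using ab(4) True nv0 by simp
        ultimately show ?thesis by simp
      next
        case False
        then have an: "\<alpha> < 0" using a0 by simp
        then have "\<alpha> * (U a \<bullet> v0) = \<alpha> * (- N v0)" using e2 by simp
        then have "U a \<bullet> v0 = - N v0" using an mult_left_cancel[of \<alpha> "U a \<bullet> v0" "- N v0"] by simp
        moreover have "\<phi> \<bullet> (z - a) < 0" using ab(4) an nv0 by (simp add: mult_neg_pos)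
        ultimately show ?thesis by simp
      qed
      then show ?thesis using e3 by blast
    qed
    define P where "P = {a\<in>A. \<phi> \<bullet> (z - a) > 0}"
    define M where "M = {a\<in>A. \<phi> \<bullet> (z - a) < 0}"
    have AU: "A = P \<union> M"
    proof -
      have "\<phi> \<bullet> (z - a) \<noteq> 0" if a: "a \<in> A" for a
      proof -
        have "z - a \<noteq> 0" using a zA by auto
        then have "N (z - a) > 0" using N_pos[OF nN] by blast
        then show ?thesis using key2[OF a] by auto
      qed
      then have "\<forall>a\<in>A. \<phi> \<bullet> (z - a) > 0 \<or> \<phi> \<bullet> (z - a) < 0" by (meson linorder_neq_iff)
      then show ?thesis unfolding P_def M_def by blast
    qed
    have disj: "P \<inter> M = {}" unfolding P_def M_def by auto
    have finP: "finite P" and finM: "finite M" using fin unfolding P_def M_def by auto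
    have UP: "U a \<bullet> v0 = N v0" if "a \<in> P" for a using key2[of a] that unfolding P_def by auto
    have UM: "U a \<bullet> v0 = - N v0" if "a \<in> M" for a using key2[of a] that unfolding M_def by auto
    have "0 = (\<Sum>a\<in>A. U a) \<bullet> v0" using Phi by simp
    also have "\<dots> = (\<Sum>a\<in>A. U a \<bullet> v0)" by (simp add: inner_sum_left)
    also have "\<dots> = (\<Sum>a\<in>P. U a \<bullet> v0) + (\<Sum>a\<in>M. U a \<bullet> v0)"
      unfolding AU by (rule sum.union_disjoint[OF finP finM disj])
    also have "\<dots> = (\<Sum>a\<in>P. N v0) + (\<Sum>a\<in>M. - N v0)"
      using UP UM by simp
    also have "\<dots> = (real (card P) - real (card M)) * N v0" by (simp add: algebra_simps)
    finally have "card P = card M" using nv0 by simp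
    define m where "m = card M"
    obtain g where g: "bij_betw g {0..<card M} M" using ex_bij_betw_nat_finite[OF finM] by blast
    obtain h where h: "bij_betw h {0..<card P} P" using ex_bij_betw_nat_finite[OF finP] by blast
    have gM: "g ` {..<m} = M" using g unfolding m_def bij_betw_def by (simp add: atLeast0LessThan)
    have hP: "h ` {..<m} = P" using h \<open>card P = card M\<close> unfolding m_def bij_betw_def
      by (simp add: atLeast0LessThan)
    define F where "F = unit_ball N \<inter> {x. \<phi> \<bullet> x = 1}"
    have face: "proper_exposed_face N F" unfolding proper_exposed_face_def F_def
      using norming_ext[OF nN v0ne phi] by blast
    have pairs: "(1 / N (g i - h i)) *\<^sub>R (g i - h i) \<in> F" if i: "i < m" for i
    proof -
      have aM: "g i \<in> M" using gM i by blast
      have bP: "h i \<in> P" using hP i by blast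
      let ?a = "g i" and ?b = "h i"
      have aA: "?a \<in> A" and bA: "?b \<in> A" using aM bP unfolding M_def P_def by auto
      have pa: "\<phi> \<bullet> (z - ?a) = - N (z - ?a)" using key2[OF aA] aM unfolding M_def by auto
      have pb: "\<phi> \<bullet> (z - ?b) = N (z - ?b)" using key2[OF bA] bP unfolding P_def by auto
      have "?a - ?b = (z - ?b) - (z - ?a)" by simp
      then have pab: "\<phi> \<bullet> (?a - ?b) = N (z - ?b) + N (z - ?a)" using pa pb
        by (simp add: inner_diff_right)
      have "?a - ?b = (?a - z) + (z - ?b)" by simp
      then have "N (?a - ?b) \<le> N (?a - z) + N (z - ?b)" using N_tri[OF nN, of "?a - z" "z - ?b"] by simp
      also have "N (?a - z) = N (z - ?a)" by (rule N_commute[OF nN])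
      finally have "N (?a - ?b) \<le> \<phi> \<bullet> (?a - ?b)" using pab by simp
      moreover have "\<phi> \<bullet> (?a - ?b) \<le> N (?a - ?b)" using phi by (simp add: norming_def)
      ultimately have eq: "\<phi> \<bullet> (?a - ?b) = N (?a - ?b)" by simp
      have "?a \<noteq> ?b" using aM bP disj by auto
      then have pos: "N (?a - ?b) > 0" using N_pos[OF nN] by simp
      have "N ((1 / N (?a - ?b)) *\<^sub>R (?a - ?b)) = 1" using pos by (simp add: N_scale[OF nN])
      moreover have "\<phi> \<bullet> ((1 / N (?a - ?b)) *\<^sub>R (?a - ?b)) = 1" using eq pos by simp
      ultimately show ?thesis unfolding F_def unit_ball_def by simp
    qed
    have "A = g ` {..<m} \<union> h ` {..<m}" using AU gM hP by auto
    moreover have "card A = 2 * m" unfolding AU using card_Un_disjoint[OF finP finM disj]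
      \<open>card P = card M\<close> m_def by simp
    ultimately have "double_cluster N A" unfolding double_cluster_def
      apply (rule_tac exI[of _ m], rule_tac exI[of _ g], rule_tac exI[of _ h], rule_tac exI[of _ F])
      using face pairs by simp
    then show False using assms(4) by blast
  qed
qed

end
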